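(* Let $\mathfrak g=\mathfrak v\oplus\mathfrak z$ be a two-step nilpotent Lie algebra with inner product, $B\in\mathbb R$, $\zeta_m\in\mathfrak z^*$, and $h(p)=\tfrac12|p+B\zeta_m|^2$ on $\mathfrak g^*$. Every integral curve of the Euler vector field $E_h$ has the form $p(t)=p_{\mathfrak v}(t)+\zeta_0$, where $\zeta_0\in\mathfrak z^*$ is constant and $p_{\mathfrak v}(t)\in\mathfrak v^*$ satisfies $p_{\mathfrak v}'(t)=\mathcal A(p_{\mathfrak v}(t))$ for some linear transformation $\mathcal A$ of $\mathfrak v^*$ that is skew-symmetric with respect to the restricted inner product.
   Context: $\mathfrak g$ is two-step nilpotent (nonabelian, all brackets central) with center $\mathfrak z$ and $\mathfrak v=\mathfrak z^\perp$; $\mathfrak v^*$ (resp. $\mathfrak z^*$) are functionals vanishing on $\mathfrak z$ (resp. $\mathfrak v$); $\mathfrak g^*$ has the dual inner product, $\sharp:\mathfrak g^*\to\mathfrak g$ the associated isomorphism, $|p|^2=\langle p,\sharp p\rangle$. The Poisson bracket on $\mathfrak g^*$ is $\{f,k\}(p)=-\langle p,[df_p,dk_p]\rangle$, and the Euler vector field of $h$ is $E_h(f)=\{f,h\}$, i.e. $E_h(p)=-\mathrm{ad}^*_{dh_p}p$ with $\langle\mathrm{ad}^*_Xp,Y\rangle=-\langle p,[X,Y]\rangle$. *)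

theory Defs
  imports "HOL-Analysis.Analysis"
begin

text \<open>The dual g* is identified with g via the
musical isomorphism (sharp), so a covector p is represented by the vector sharp p, and
the pairing p(X) is p \<bullet> X.\<close>

definition two_step_nilpotent :: "('a::euclidean_space \<Rightarrow> 'a \<Rightarrow> 'a) \<Rightarrow> bool" where
  "two_step_nilpotent brk \<longleftrightarrow>
     bilinear brk \<and> (\<forall>x y. brk x y = - brk y x) \<and>
     (\<forall>x y w. brk (brk x y) w = 0) \<and> (\<exists>x y. brk x y \<noteq> 0)"

definition lie_center :: "('a::euclidean_space \<Rightarrow> 'a \<Rightarrow> 'a) \<Rightarrow> 'a set" where
  "lie_center brk = {x. \<forall>y. brk x y = 0}"

definition vpart :: "('a::euclidean_space \<Rightarrow> 'a \<Rightarrow> 'a) \<Rightarrow> 'a set" where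
  "vpart brk = {x. \<forall>z\<in>lie_center brk. x \<bullet> z = 0}"

text \<open>Differential dh_p of h at p, as an element of (g*)* = g.\<close>
definition dfun :: "('a::euclidean_space \<Rightarrow> real) \<Rightarrow> 'a \<Rightarrow> 'a" where
  "dfun h p = (THE X. (h has_derivative (\<lambda>q. X \<bullet> q)) (at p))"

text \<open>Euler vector field E_h(p) = - ad*_{dh_p} p, i.e. (E_h p)(Y) = p([dh_p, Y]).\<close>
definition euler_field :: "('a::euclidean_space \<Rightarrow> 'a \<Rightarrow> 'a) \<Rightarrow> ('a \<Rightarrow> real) \<Rightarrow> 'a \<Rightarrow> 'a" where
  "euler_field brk h p = (THE e. \<forall>Y. e \<bullet> Y = p \<bullet> brk (dfun h p) Y)"

end

theory Submission
  imports Defs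
begin

lemma rep_THE:
  fixes L :: "'a::euclidean_space \<Rightarrow> real"
  assumes "linear L"
  shows "(THE e. \<forall>Y. e \<bullet> Y = L Y) \<bullet> Y = L Y"
proof -
  have ex: "\<forall>Y. adjoint L 1 \<bullet> Y = L Y"
    using adjoint_works[OF assms, where y=1] by (simp add: inner_commute)
  have "\<forall>Y. (THE e. \<forall>Y. e \<bullet> Y = L Y) \<bullet> Y = L Y"
  proof (rule theI[where a="adjoint L 1"])
    show "\<forall>Y. adjoint L 1 \<bullet> Y = L Y" by (rule ex)
  next
    fix e assume "\<forall>Y. e \<bullet> Y = L Y"
    then show "e = adjoint L 1" using ex by (metis vector_eq_rdot)
  qed
  then show ?thesis by blast
qed

lemma lin_pair:
  assumes "bilinear brk"
  shows "linear (\<lambda>Y. q \<bullet> brk d Y)"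
proof -
  have "linear (brk d)" using assms by (simp add: bilinear_def)
  then show ?thesis
    by (rule linear_compose[where g="\<lambda>v. q \<bullet> v", unfolded o_def])
       (rule bounded_linear.linear[OF bounded_linear_inner_right])
qed

lemma dfun_h:
  fixes c :: "'a::euclidean_space"
  shows "dfun (\<lambda>q. (1/2) * (norm (q + c))\<^sup>2) p = p + c"
proof -
  have d: "((\<lambda>q. (1/2) * (norm (q + c))\<^sup>2) has_derivative (\<lambda>h. (p + c) \<bullet> h)) (at p)"
  proof -
    have "((\<lambda>q. (1/2) * ((q + c) \<bullet> (q + c))) has_derivative
           (\<lambda>h. (1/2) * (h \<bullet> (p + c) + (p + c) \<bullet> h))) (at p)"
      by (auto intro!: derivative_eq_intros)
    moreover have "(\<lambda>h. (1/2) * (h \<bullet> (p + c) + (p + c) \<bullet> h)) = (\<lambda>h. (p + c) \<bullet> h)"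
      by (auto simp: inner_commute)
    ultimately show ?thesis by (simp add: power2_norm_eq_inner)
  qed
  show ?thesis unfolding dfun_def
  proof (rule the_equality)
    show "((\<lambda>q. (1/2) * (norm (q + c))\<^sup>2) has_derivative (\<lambda>h. (p + c) \<bullet> h)) (at p)" by (rule d)
  next
    fix X assume "((\<lambda>q. (1/2) * (norm (q + c))\<^sup>2) has_derivative (\<lambda>q. X \<bullet> q)) (at p)"
    then have "(\<lambda>q. X \<bullet> q) = (\<lambda>h. (p + c) \<bullet> h)" using d by (rule has_derivative_unique)
    then show "X = p + c" by (metis vector_eq_rdot)
  qed
qed

theorem lemma2p5:
  fixes brk :: "'a::euclidean_space \<Rightarrow> 'a \<Rightarrow> 'a"
    and B :: real and \<zeta>m :: 'a and p :: "real \<Rightarrow> 'a" and I :: "real set"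
  assumes "two_step_nilpotent brk"
    and "\<zeta>m \<in> lie_center brk"
    and "open I" and "is_interval I"
    and "\<And>t. t \<in> I \<Longrightarrow>
           (p has_vector_derivative
              euler_field brk (\<lambda>q. (1/2) * (norm (q + B *\<^sub>R \<zeta>m))\<^sup>2) (p t)) (at t)"
  shows "\<exists>\<zeta>0 pv A. \<zeta>0 \<in> lie_center brk \<and> linear A \<and> A ` vpart brk \<subseteq> vpart brk \<and>
           (\<forall>x\<in>vpart brk. \<forall>y\<in>vpart brk. A x \<bullet> y = - (x \<bullet> A y)) \<and>
           (\<forall>t\<in>I. pv t \<in> vpart brk \<and> p t = pv t + \<zeta>0 \<and>
                   (pv has_vector_derivative A (pv t)) (at t))"
proof -
  let ?h = "\<lambda>q. (1/2) * (norm (q + B *\<^sub>R \<zeta>m))\<^sup>2"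
  have bil: "bilinear brk" and skew: "\<And>x y. brk x y = - brk y x"
    and nil: "\<And>x y w. brk (brk x y) w = 0"
  proof -
    have H: "bilinear brk \<and> (\<forall>x y. brk x y = - brk y x) \<and> (\<forall>x y w. brk (brk x y) w = 0)"
      using assms(1) unfolding two_step_nilpotent_def by (elim conjE) (intro conjI)
    show "bilinear brk" using H by (rule conjunct1)
    show "\<And>x y. brk x y = - brk y x" using H[THEN conjunct2, THEN conjunct1] by (rule spec2)
    show "\<And>x y w. brk (brk x y) w = 0" using H[THEN conjunct2, THEN conjunct2] by blast
  qed
  have cen: "\<And>y. brk \<zeta>m y = 0" using assms(2) by (simp add: lie_center_def)
  have E: "euler_field brk ?h q \<bullet> Y = q \<bullet> brk q Y" for q Y
  proof -
    have "euler_field brk ?h q \<bullet> Y = q \<bullet> brk (q + B *\<^sub>R \<zeta>m) Y"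
      unfolding euler_field_def dfun_h by (rule rep_THE[OF lin_pair[OF bil]])
    also have "\<dots> = q \<bullet> brk q Y"
      by (simp add: bilinear_ladd[OF bil] bilinear_lmul[OF bil] cen)
    finally show ?thesis .
  qed
  have subC: "subspace (lie_center brk)"
    unfolding subspace_def lie_center_def
    by (auto simp: bilinear_lzero[OF bil] bilinear_ladd[OF bil] bilinear_lmul[OF bil])
  have brkC: "brk x y \<in> lie_center brk" for x y using nil by (simp add: lie_center_def)
  have brkC2: "brk x z = 0" if "z \<in> lie_center brk" for x z
    using that skew[of x z] by (simp add: lie_center_def)
  show ?thesis
  proof (cases "I = {}")
    case True
    show ?thesis
      apply (rule exI[where x=0], rule exI[where x=p], rule exI[where x="\<lambda>x. 0"])
      using True subC bounded_linear.linear[OF bounded_linear_zero] by (auto simp: subspace_0 vpart_def)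
  next
    case False
    then obtain t0 where t0: "t0 \<in> I" by blast
    obtain y z where y: "y \<in> span (lie_center brk)"
      and z: "\<And>w. w \<in> span (lie_center brk) \<Longrightarrow> orthogonal z w" and yz: "p t0 = y + z"
      by (rule orthogonal_subspace_decomp_exists[of "lie_center brk" "p t0"]) blast
    have spanC: "span (lie_center brk) = lie_center brk" using subC by (metis span_eq_iff)
    have yC: "y \<in> lie_center brk" using y spanC by simp
    have zV: "z \<in> vpart brk" using z spanC by (auto simp: vpart_def orthogonal_def)
    have const: "p t \<bullet> w = p t0 \<bullet> w" if "t \<in> I" "w \<in> lie_center brk" for t w
    proof -
      have "\<And>s. s \<in> I \<Longrightarrow> ((\<lambda>s. p s \<bullet> w) has_field_derivative 0) (at s within I)"
      proof -
        fix s assume s: "s \<in> I"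
        have "((\<lambda>s. p s \<bullet> w) has_field_derivative (euler_field brk ?h (p s) \<bullet> w)) (at s)"
          using assms(5)[OF s] unfolding has_vector_derivative_def has_field_derivative_def
          by (auto intro!: derivative_eq_intros simp: inner_scaleR_left)
        moreover have "euler_field brk ?h (p s) \<bullet> w = 0"
          using E brkC2[OF that(2)] by simp
        ultimately show "((\<lambda>s. p s \<bullet> w) has_field_derivative 0) (at s within I)"
          by (simp add: has_field_derivative_at_within)
      qed
      then obtain c where "\<forall>x\<in>I. p x \<bullet> w = c"
        using has_field_derivative_zero_constant[OF is_interval_convex[OF assms(4)]] by blast
      then show ?thesis using that t0 by auto
    qed
    define A where "A x = (THE e. \<forall>Y. e \<bullet> Y = y \<bullet> brk x Y)" for x
    have AY: "A x \<bullet> Y = y \<bullet> brk x Y" for x Y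
      unfolding A_def by (rule rep_THE[OF lin_pair[OF bil]])
    have linA: "linear A"
    proof (rule linearI)
      fix a b show "A (a + b) = A a + A b"
        by (rule vector_eq_rdot[THEN iffD1])
           (simp add: AY inner_add_left bilinear_ladd[OF bil] inner_add_right)
    next
      fix r a show "A (r *\<^sub>R a) = r *\<^sub>R A a"
        by (rule vector_eq_rdot[THEN iffD1])
           (simp add: AY bilinear_lmul[OF bil])
    qed
    define pv where "pv t = p t - y" for t
    show ?thesis
    proof (rule exI[where x=y], rule exI[where x=pv], rule exI[where x=A], intro conjI ballI)
      show "y \<in> lie_center brk" by (rule yC)
      show "linear A" by (rule linA)
      show "A ` vpart brk \<subseteq> vpart brk"
        by (auto simp: vpart_def AY brkC2)
      fix x w assume "x \<in> vpart brk" "w \<in> vpart brk"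
      show "A x \<bullet> w = - (x \<bullet> A w)"
        by (simp add: AY inner_commute[of x] skew[of x w])
    next
      fix t assume t: "t \<in> I"
      show "pv t \<in> vpart brk"
        unfolding vpart_def pv_def
      proof safe
        fix w assume w: "w \<in> lie_center brk"
        have "(p t - y) \<bullet> w = (p t0 - y) \<bullet> w" using const[OF t w] by (simp add: inner_diff_left)
        also have "\<dots> = z \<bullet> w" using yz by simp
        also have "\<dots> = 0" using zV w by (simp add: vpart_def)
        finally show "(p t - y) \<bullet> w = 0" .
      qed
      then have pvV: "pv t \<in> vpart brk" .
      show "p t = pv t + y" by (simp add: pv_def)
      have "euler_field brk ?h (p t) = A (pv t)"
      proof (rule vector_eq_rdot[THEN iffD1], rule allI)
        fix Y
        have "euler_field brk ?h (p t) \<bullet> Y = (pv t + y) \<bullet> brk (pv t + y) Y"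
          using E[of "p t" Y] by (simp add: pv_def)
        also have "\<dots> = (pv t + y) \<bullet> brk (pv t) Y"
          using yC by (simp add: lie_center_def bilinear_ladd[OF bil])
        also have "\<dots> = y \<bullet> brk (pv t) Y"
          using pvV brkC by (simp add: inner_add_left vpart_def)
        finally show "euler_field brk ?h (p t) \<bullet> Y = A (pv t) \<bullet> Y" by (simp add: AY)
      qed
      then show "(pv has_vector_derivative A (pv t)) (at t)"
        unfolding pv_def[abs_def] using assms(5)[OF t]
        by (auto intro!: derivative_eq_intros)
    qed
  qed
qed

end
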